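(* Let $X$ be a Calabi–Yau 4-fold, $\beta\in H_2(X,\mathbb{Z})$ and $\alpha\in H^2(X)$ with $\alpha\cdot\beta=0$. Then the identity \[ n_{0,\beta}(\alpha^2)=\frac{1}{2}\sum_{\substack{\beta_1+\beta_2=\beta\\ \beta_1,\beta_2>0}}(\alpha\cdot\beta_1)(\alpha\cdot\beta_2)\,m_{\beta_1,\beta_2} \] is equivalent to the identity \[ n_{0,\beta}(\alpha^2)=\frac{1}{2}\sum_{\substack{k_1,k_2\in\mathbb{Z}_{>0}\\ \gcd(k_1,k_2)=1}}\ \sum_{\substack{\beta_1+\beta_2=\beta\\ k_1\mid\beta_1,\ k_2\mid\beta_2}}\ \sum_{a,b}\frac{(\alpha\cdot\beta_1)(\alpha\cdot\beta_2)}{k_1^2k_2^2}\,n_{0,\beta_1/k_1}(S_a)\,g^{ab}\,n_{0,\beta_2/k_2}(S_b), \] where $\{S_a\}$ is a basis of the free part of $H^4(X,\mathbb{Z})$.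
   Context: A Calabi–Yau 4-fold is a smooth complex projective 4-fold with $K_X\cong\mathcal{O}_X$. Fix an ample class; $\beta>0$ means nonzero of positive degree; sums over $\beta_1+\beta_2=\beta$ run over $\beta_1,\beta_2>0$, and $k\mid\beta_i$ means $\beta_i/k\in H_2(X,\mathbb{Z})$. $\mathrm{GW}_{0,\beta}(\gamma)=\int_{[\overline{M}_{0,1}(X,\beta)]^{\mathrm{vir}}}\mathrm{ev}^*\gamma$ for $\gamma\in H^4(X)$, and $n_{0,\beta}(\gamma)$ is defined by $\sum_{\beta>0}\mathrm{GW}_{0,\beta}(\gamma)q^\beta=\sum_{\beta>0}n_{0,\beta}(\gamma)\sum_{d\ge1}d^{-2}q^{d\beta}$ (extended linearly in $\gamma$). $\sum_{a,b}g^{ab}S_a\otimes S_b$ is the Künneth decomposition of the $(4,4)$-component of the diagonal class mod torsion, i.e. $(g^{ab})$ is the inverse of $(g_{ab})=(\int_XS_aS_b)$. The meeting invariants $m_{\beta_1,\beta_2}$ are determined by: symmetry; $m_{\beta_1,\beta_2}=0$ if $\deg\beta_1\le0$ or $\deg\beta_2\le0$; for $\beta_1\ne\beta_2$, $m_{\beta_1,\beta_2}=\sum n_{0,\beta_1}(S_a)g^{ab}n_{0,\beta_2}(S_b)+m_{\beta_1,\beta_2-\beta_1}+m_{\beta_1-\beta_2,\beta_2}$; $m_{\beta,\beta}=n_{0,\beta}(c_2(X))+\sum n_{0,\beta}(S_a)g^{ab}n_{0,\beta}(S_b)-\sum_{\beta_1+\beta_2=\beta}m_{\beta_1,\beta_2}$.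 *)

theory Defs
  imports "HOL-Analysis.Analysis"
begin

text \<open>H_2(X,Z) is an abelian group 'h; the degree w.r.t. the fixed ample class is an additive
  map deg :: 'h => int; the basis S_a of the free part of H^4(X,Z) is indexed by a finite
  type 'a, and classes of H^4(X) are given by their coordinates 'a => real.
  N beta a stands for n_{0,beta}(S_a).\<close>

primrec scaleN :: "nat \<Rightarrow> 'h::ab_group_add \<Rightarrow> 'h" where
  "scaleN 0 x = 0"
| "scaleN (Suc k) x = x + scaleN k x"

definition pos :: "('h::ab_group_add \<Rightarrow> int) \<Rightarrow> 'h \<Rightarrow> bool" where
  "pos deg x \<longleftrightarrow> x \<noteq> 0 \<and> deg x > 0"

text \<open>n_{0,beta}(gamma), extended linearly in gamma = sum_a gamma_a S_a.\<close>
definition nGW :: "('h \<Rightarrow> 'a::finite \<Rightarrow> real) \<Rightarrow> 'h \<Rightarrow> ('a \<Rightarrow> real) \<Rightarrow> real" where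
  "nGW N x \<gamma> = (\<Sum>a\<in>UNIV. \<gamma> a * N x a)"

definition ginv :: "real^'a::finite^'a \<Rightarrow> 'a \<Rightarrow> 'a \<Rightarrow> real" where
  "ginv G a b = matrix_inv G $ a $ b"

definition pairing :: "('h \<Rightarrow> 'a::finite \<Rightarrow> real) \<Rightarrow> real^'a^'a \<Rightarrow> 'h \<Rightarrow> 'h \<Rightarrow> real" where
  "pairing N G x y = (\<Sum>a\<in>UNIV. \<Sum>b\<in>UNIV. N x a * ginv G a b * N y b)"

definition meeting_invariants ::
  "('h::ab_group_add \<Rightarrow> int) \<Rightarrow> ('h \<Rightarrow> 'a::finite \<Rightarrow> real) \<Rightarrow> real^'a^'a \<Rightarrow> ('a \<Rightarrow> real)
   \<Rightarrow> ('h \<Rightarrow> 'h \<Rightarrow> real) \<Rightarrow> bool" where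
  "meeting_invariants deg N G c2 m \<longleftrightarrow>
     (\<forall>x y. m x y = m y x) \<and>
     (\<forall>x y. deg x \<le> 0 \<or> deg y \<le> 0 \<longrightarrow> m x y = 0) \<and>
     (\<forall>x y. pos deg x \<longrightarrow> pos deg y \<longrightarrow> x \<noteq> y \<longrightarrow>
        m x y = pairing N G x y + m x (y - x) + m (x - y) y) \<and>
     (\<forall>x. pos deg x \<longrightarrow>
        m x x = nGW N x c2 + pairing N G x x
                - (\<Sum>\<^sub>\<infinity>x1\<in>{x1. pos deg x1 \<and> pos deg (x - x1)}. m x1 (x - x1)))"

end

theory Submission imports Defs begin

lemma scaleN_addn: "scaleN (p+q) x = scaleN p x + scaleN q (x::'h::ab_group_add)"
  by (induction p) (auto simp: algebra_simps)

lemma scaleN_add: "scaleN k (x+y) = scaleN k x + scaleN k (y::'h::ab_group_add)"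
  by (induction k) (auto simp: algebra_simps)

lemma scaleN_diff: "scaleN k (x-y) = scaleN k x - scaleN k (y::'h::ab_group_add)"
  by (induction k) (auto simp: algebra_simps)

lemma scaleN_one[simp]: "scaleN (Suc 0) x = x"
  by simp

lemma hom_zero:
  fixes f :: "'h::ab_group_add \<Rightarrow> 'b::ring_1"
  assumes "\<And>x y. f (x+y) = f x + f y"
  shows "f 0 = 0"
  using assms[of 0 0] by simp

lemma hom_diff:
  fixes f :: "'h::ab_group_add \<Rightarrow> 'b::ring_1"
  assumes "\<And>x y. f (x+y) = f x + f y"
  shows "f (x - y) = f x - f y"
  using assms[of "x-y" y] by (simp add: algebra_simps)

lemma hom_scaleN:
  fixes f :: "'h::ab_group_add \<Rightarrow> 'b::ring_1"
  assumes "\<And>x y. f (x+y) = f x + f y"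
  shows "f (scaleN k x) = of_nat k * f x"
  by (induction k) (auto simp: assms hom_zero[OF assms] algebra_simps)

definition par :: "nat \<times> nat \<Rightarrow> nat \<times> nat" where
  "par z = (case z of (a,b) \<Rightarrow> if b < a then (a-b,b) else if a < b then (a,b-a) else (a,b))"

definition Dset :: "nat \<Rightarrow> nat \<Rightarrow> (nat\<times>nat) set" where
  "Dset p q = {(a,b). 0<a \<and> 0<b \<and> (\<exists>n. (par^^n) (a,b) = (p,q))}"

lemma par_sum: "fst (par z) + snd (par z) \<le> fst z + snd z"
  by (cases z) (auto simp: par_def)

lemma parn_sum: "fst ((par^^n) z) + snd ((par^^n) z) \<le> fst z + snd z"
  by (induction n) (auto intro: order_trans[OF par_sum])

lemma par_child:
  assumes "0<p" "0<q" "par z = (p,q)"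
  shows "z = (p,q) \<or> z = (p+q,q) \<or> z = (p,p+q)"
  using assms by (cases z) (auto simp: par_def split: if_splits)

lemma par_gcd: "gcd (fst (par z)) (snd (par z)) = gcd (fst z) (snd z)"
proof (cases z)
  case (Pair a b)
  then show ?thesis
    by (auto simp: par_def gcd_diff1_nat gcd.commute[of a] gcd_diff1_nat[of b a])
qed

lemma parn_gcd: "gcd (fst ((par^^n) z)) (snd ((par^^n) z)) = gcd (fst z) (snd z)"
  by (induction n) (auto simp: par_gcd)

lemma parn_back:
  assumes "0<p" "0<q"
  shows "(par^^n) z = (p,q) \<Longrightarrow> z = (p,q) \<or> (\<exists>j. (par^^j) z \<in> {(p+q,q),(p,p+q)})"
proof (induction n arbitrary: z)
  case 0
  then show ?case by simp
next
  case (Suc n)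
  have "(par^^n) (par z) = (p,q)" using Suc.prems by (simp add: funpow_Suc_right del: funpow.simps)
  from Suc.IH[OF this] show ?case
  proof
    assume "par z = (p,q)"
    then have "z = (p,q) \<or> z = (p+q,q) \<or> z = (p,p+q)" using par_child assms by blast
    then show ?thesis by (metis funpow_0 insert_iff)
  next
    assume "\<exists>j. (par^^j) (par z) \<in> {(p+q,q),(p,p+q)}"
    then obtain j where "(par^^j) (par z) \<in> {(p+q,q),(p,p+q)}" by blast
    then have "(par^^(Suc j)) z \<in> {(p+q,q),(p,p+q)}" by (simp add: funpow_Suc_right del: funpow.simps)
    then show ?thesis by blast
  qed
qed

lemma D_sum: "(a,b) \<in> Dset p q \<Longrightarrow> p + q \<le> a + b"
  unfolding Dset_def using parn_sum by (auto, metis fst_conv snd_conv)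

lemma D_self: "0<p \<Longrightarrow> 0<q \<Longrightarrow> (p,q) \<in> Dset p q"
  unfolding Dset_def by (auto intro: exI[of _ 0])

lemma D_split:
  assumes "0<p" "0<q"
  shows "Dset p q = insert (p,q) (Dset (p+q) q \<union> Dset p (p+q))"
proof (intro equalityI subsetI)
  fix z assume z: "z \<in> Dset p q"
  then obtain a b n where zab: "z = (a,b)" "0<a" "0<b" "(par^^n) (a,b) = (p,q)"
    unfolding Dset_def by auto
  from parn_back[OF assms this(4)] have "(a,b) = (p,q) \<or> (\<exists>j. (par^^j) (a,b) \<in> {(p+q,q),(p,p+q)})" .
  then show "z \<in> insert (p,q) (Dset (p+q) q \<union> Dset p (p+q))"
    using zab unfolding Dset_def by auto
next
  fix z assume z: "z \<in> insert (p,q) (Dset (p+q) q \<union> Dset p (p+q))"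
  have p1: "par (p+q,q) = (p,q)" "par (p,p+q) = (p,q)" using assms by (auto simp: par_def)
  show "z \<in> Dset p q"
  proof (cases "z = (p,q)")
    case True then show ?thesis using D_self assms by simp
  next
    case False
    then obtain a b n where zab: "z = (a,b)" "0<a" "0<b" "(par^^n) (a,b) \<in> {(p+q,q),(p,p+q)}"
      using z unfolding Dset_def by auto
    then have "(par^^(Suc n)) (a,b) = (p,q)" using p1 by auto
    then show ?thesis using zab unfolding Dset_def by blast
  qed
qed

lemma D_notin:
  assumes "0<p" "0<q"
  shows "(p,q) \<notin> Dset (p+q) q \<union> Dset p (p+q)"
  using D_sum assms by fastforce

lemma D_disj:
  assumes "0<p" "0<q"
  shows "Dset (p+q) q \<inter> Dset p (p+q) = {}"
proof (rule ccontr)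
  assume "\<not> ?thesis"
  then obtain a b n k where nk: "(par^^n) (a,b) = (p+q,q)" "(par^^k) (a,b) = (p,p+q)"
    unfolding Dset_def by auto
  have p1: "par (p+q,q) = (p,q)" "par (p,p+q) = (p,q)" using assms by (auto simp: par_def)
  show False
  proof (cases "n \<le> k")
    case True
    then obtain j where j: "k = j + n" by (metis le_add_diff_inverse2)
    have "(par^^j) (p+q,q) = (p,p+q)" using nk j by (simp add: funpow_add)
    moreover have "j \<noteq> 0" using calculation assms by (cases j) auto
    ultimately obtain i where "(par^^i) (p,q) = (p,p+q)"
      by (metis not0_implies_Suc funpow_Suc_right o_apply p1(1))
    then show False using parn_sum[of i "(p,q)"] assms by simp
  next
    case False
    then obtain j where j: "n = j + k" by (metis le_add_diff_inverse2 nat_le_linear)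
    have "(par^^j) (p,p+q) = (p+q,q)" using nk j by (simp add: funpow_add)
    moreover have "j \<noteq> 0" using calculation assms by (cases j) auto
    ultimately obtain i where "(par^^i) (p,q) = (p+q,q)"
      by (metis not0_implies_Suc funpow_Suc_right o_apply p1(2))
    then show False using parn_sum[of i "(p,q)"] assms by simp
  qed
qed

lemma reach11: "0<a \<Longrightarrow> 0<b \<Longrightarrow> coprime a b \<Longrightarrow> \<exists>n. (par^^n) (a,b) = (1,1)"
proof (induction "a+b" arbitrary: a b rule: less_induct)
  case less
  show ?case
  proof (cases "a = b")
    case True
    then have "a = 1" using less.prems by (simp add: coprime_iff_gcd_eq_1)
    then show ?thesis using True by (auto intro: exI[of _ 0])
  next
    case False
    have "0 < fst (par (a,b)) \<and> 0 < snd (par (a,b)) \<and> coprime (fst (par (a,b))) (snd (par (a,b)))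
          \<and> fst (par (a,b)) + snd (par (a,b)) < a + b"
      using False less.prems par_gcd[of "(a,b)"] by (auto simp: par_def coprime_iff_gcd_eq_1)
    moreover obtain a' b' where ab': "par (a,b) = (a',b')" by force
    ultimately have "0 < a'" "0 < b'" "coprime a' b'" "a' + b' < a + b" by auto
    then obtain n where "(par^^n) (a',b') = (1,1)"
      using less.hyps by blast
    then have "(par^^n) (par (a,b)) = (1,1)" using ab' by simp
    then have "(par^^(Suc n)) (a,b) = (1,1)" by (simp add: funpow_Suc_right del: funpow.simps)
    then show ?thesis by blast
  qed
qed

lemma D11: "Dset 1 1 = {(a,b). 0<a \<and> 0<b \<and> coprime a b}"
proof (intro equalityI subsetI)
  fix z assume "z \<in> Dset 1 1"
  then obtain a b n where ab: "z = (a,b)" "0<a" "0<b" "(par^^n) (a,b) = (1,1)" unfolding Dset_def by auto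
  have "gcd a b = gcd 1 1" using parn_gcd[of n "(a,b)"] ab(4) by simp
  then have "coprime a b" by (simp add: coprime_iff_gcd_eq_1)
  then show "z \<in> {(a,b). 0<a \<and> 0<b \<and> coprime a b}" using ab by simp
next
  fix z :: "nat \<times> nat" assume "z \<in> {(a,b). 0<a \<and> 0<b \<and> coprime a b}"
  then obtain a b where ab: "z = (a,b)" "0<a" "0<b" "coprime a b" by auto
  then obtain n where "(par^^n) (a,b) = (1,1)" using reach11 by blast
  then show "z \<in> Dset 1 1" using ab unfolding Dset_def by blast
qed


lemma scaleN_one'[simp]: "scaleN 1 x = x"
  by (simp add: One_nat_def)

lemma wl1:
  fixes a b P Q :: real
  assumes "P > 0" "Q > 0" "(P+Q)*a + Q*b = 0"
  shows "a*(b+a)/(P*Q) = a*b/((P+Q)*Q)"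
proof -
  have "a*(b+a)*((P+Q)*Q) - a*b*(P*Q) = a*Q*((P+Q)*a + Q*b)" by (simp add: algebra_simps)
  then have "a*(b+a)*((P+Q)*Q) = a*b*(P*Q)" using assms by simp
  then show ?thesis using assms by (simp add: frac_eq_eq)
qed

lemma wl2:
  fixes a b P Q :: real
  assumes "P > 0" "Q > 0" "P*a + (P+Q)*b = 0"
  shows "(a+b)*b/(P*Q) = a*b/(P*(P+Q))"
proof -
  have "(a+b)*b*(P*(P+Q)) - a*b*(P*Q) = b*P*(P*a + (P+Q)*b)" by (simp add: algebra_simps)
  then have "(a+b)*b*(P*(P+Q)) = a*b*(P*Q)" using assms by simp
  then show ?thesis using assms by (simp add: frac_eq_eq)
qed

theorem lemma2p3:
  fixes deg :: "'h::ab_group_add \<Rightarrow> int"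
    and al :: "'h \<Rightarrow> real"
    and E :: "'h set"
    and N :: "'h \<Rightarrow> 'a::finite \<Rightarrow> real"
    and G :: "real^'a^'a"
    and c2 alsq :: "'a \<Rightarrow> real"
    and m :: "'h \<Rightarrow> 'h \<Rightarrow> real"
    and \<beta> :: 'h
  assumes deg_add: "\<And>x y. deg (x + y) = deg x + deg y"
    and al_add: "\<And>x y. al (x + y) = al x + al y"
    and E_add: "\<And>x y. x \<in> E \<Longrightarrow> y \<in> E \<Longrightarrow> x + y \<in> E"
    and E_pos: "\<And>x. x \<in> E \<Longrightarrow> pos deg x"
    and E_fin: "\<And>d. finite {x \<in> E. deg x \<le> d}"
    and N_supp: "\<And>x a. x \<notin> E \<Longrightarrow> N x a = 0"
    and G_sym: "transpose G = G"
    and G_inv: "invertible G"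
    and m_def: "meeting_invariants deg N G c2 m"
    and orth: "al \<beta> = 0"
  shows "(nGW N \<beta> alsq =
            1/2 * (\<Sum>\<^sub>\<infinity>b1\<in>{b1. pos deg b1 \<and> pos deg (\<beta> - b1)}.
                      al b1 * al (\<beta> - b1) * m b1 (\<beta> - b1)))
     \<longleftrightarrow>
         (nGW N \<beta> alsq =
            1/2 * (\<Sum>\<^sub>\<infinity>(k1, k2, g1, g2)\<in>{(k1::nat, k2::nat, g1::'h, g2::'h).
                       0 < k1 \<and> 0 < k2 \<and> coprime k1 k2 \<and>
                       pos deg (scaleN k1 g1) \<and> pos deg (scaleN k2 g2) \<and>
                       scaleN k1 g1 + scaleN k2 g2 = \<beta>}.
                    al (scaleN k1 g1) * al (scaleN k2 g2) / (real k1 ^ 2 * real k2 ^ 2)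
                      * pairing N G g1 g2))"
proof -
  have deg0: "deg 0 = 0" by (rule hom_zero[OF deg_add])
  have degd: "\<And>x y. deg (x - y) = deg x - deg y" by (rule hom_diff[OF deg_add])
  have degs: "\<And>k x. deg (scaleN k x) = int k * deg x" using hom_scaleN[OF deg_add] by simp
  have ald: "\<And>x y. al (x - y) = al x - al y" by (rule hom_diff[OF al_add])
  have als: "\<And>k x. al (scaleN k x) = real k * al x" using hom_scaleN[OF al_add] by simp
  have posI: "\<And>x. deg x > 0 \<Longrightarrow> pos deg x" using deg0 unfolding pos_def by auto
  have posD: "\<And>x. pos deg x \<Longrightarrow> deg x > 0" unfolding pos_def by auto
  have Edeg: "\<And>x. x \<in> E \<Longrightarrow> deg x > 0" using E_pos posD by blast
  have mrec: "\<And>x y. pos deg x \<Longrightarrow> pos deg y \<Longrightarrow> x \<noteq> y \<Longrightarrow>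
      m x y = pairing N G x y + m x (y - x) + m (x - y) y"
    using conjunct1[OF conjunct2[OF conjunct2[OF m_def[unfolded meeting_invariants_def]]], rule_format] by blast
  have mzero: "\<And>x y. deg x \<le> 0 \<or> deg y \<le> 0 \<Longrightarrow> m x y = 0"
    using conjunct1[OF conjunct2[OF m_def[unfolded meeting_invariants_def]], rule_format] by blast
  have pairE: "\<And>x y. pairing N G x y \<noteq> 0 \<Longrightarrow> x \<in> E \<and> y \<in> E"
  proof -
    fix x y assume nz: "pairing N G x y \<noteq> 0"
    show "x \<in> E \<and> y \<in> E"
    proof (rule ccontr)
      assume "\<not> (x \<in> E \<and> y \<in> E)"
      then have "pairing N G x y = 0" unfolding pairing_def by (auto simp: N_supp)
      then show False using nz by simp
    qed
  qed
  have SL0: "\<forall>x y p q. deg x > 0 \<longrightarrow> deg y > 0 \<longrightarrow> deg x + deg y \<le> int n \<longrightarrow> 0 < p \<longrightarrow> 0 < q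
     \<longrightarrow> real p * al x + real q * al y = 0 \<longrightarrow> al x * al y * m x y \<noteq> 0 \<longrightarrow> x \<in> E \<and> y \<in> E" for n
  proof (induction n)
    case 0
    then show ?case by auto
  next
    case (Suc n)
    show ?case
    proof (intro allI impI)
      fix x y and p q :: nat
      assume dx: "deg x > 0" and dy: "deg y > 0" and dxy: "deg x + deg y \<le> int (Suc n)"
        and p: "0 < p" and q: "0 < q" and h: "real p * al x + real q * al y = 0"
        and nz: "al x * al y * m x y \<noteq> 0"
      have ax: "al x \<noteq> 0" and ay: "al y \<noteq> 0" and mxy: "m x y \<noteq> 0" using nz by auto
      have xy: "x \<noteq> y"
      proof
        assume "x = y"
        then have "(real p + real q) * al x = 0" using h by (simp add: algebra_simps)
        then show False using ax p q by simp
      qed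
      have rec: "m x y = pairing N G x y + m x (y - x) + m (x - y) y"
        using mrec[OF posI[OF dx] posI[OF dy] xy] .
      show "x \<in> E \<and> y \<in> E"
      proof (cases "pairing N G x y \<noteq> 0")
        case True then show ?thesis using pairE by blast
      next
        case False
        then have "m x (y - x) \<noteq> 0 \<or> m (x - y) y \<noteq> 0" using rec mxy by auto
        then show ?thesis
        proof
          assume m1: "m x (y - x) \<noteq> 0"
          then have "\<not> (deg x \<le> 0 \<or> deg (y - x) \<le> 0)" using mzero by blast
          then have d1: "deg (y - x) > 0" by simp
          have h1: "real (p+q) * al x + real q * al (y - x) = 0" using h by (simp add: ald algebra_simps)
          have a1: "al (y - x) \<noteq> 0"
          proof
            assume "al (y - x) = 0"
            then have "real (p+q) * al x = 0" using h1 by simp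
            then show False using ax p by simp
          qed
          have "x \<in> E \<and> y - x \<in> E"
            using Suc.IH[rule_format, OF dx d1 _ _ q h1] ax a1 m1 dxy dx p by (simp add: degd)
          then have "x + (y - x) \<in> E" using E_add by blast
          then show ?thesis using \<open>x \<in> E \<and> y - x \<in> E\<close> by simp
        next
          assume m1: "m (x - y) y \<noteq> 0"
          then have "\<not> (deg (x - y) \<le> 0 \<or> deg y \<le> 0)" using mzero by blast
          then have d1: "deg (x - y) > 0" by simp
          have h1: "real p * al (x - y) + real (p+q) * al y = 0" using h by (simp add: ald algebra_simps)
          have a1: "al (x - y) \<noteq> 0"
          proof
            assume "al (x - y) = 0"
            then have "real (p+q) * al y = 0" using h1 by simp
            then show False using ay p by simp
          qed
          have "x - y \<in> E \<and> y \<in> E"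
            using Suc.IH[rule_format, OF d1 dy _ p _ h1] ay a1 m1 dxy dy q by (simp add: degd)
          then have "(x - y) + y \<in> E" using E_add by blast
          then show ?thesis using \<open>x - y \<in> E \<and> y \<in> E\<close> by simp
        qed
      qed
    qed
  qed
  have SL: "\<And>x y p q. deg x > 0 \<Longrightarrow> deg y > 0 \<Longrightarrow> 0 < p \<Longrightarrow> 0 < q \<Longrightarrow>
     real p * al x + real q * al y = 0 \<Longrightarrow> al x * al y * m x y \<noteq> 0 \<Longrightarrow> x \<in> E \<and> y \<in> E"
  proof -
    fix x y and p q :: nat
    assume a: "deg x > 0" "deg y > 0" "0 < p" "0 < q" "real p * al x + real q * al y = 0"
      "al x * al y * m x y \<noteq> 0"
    have "deg x + deg y \<le> int (nat (deg x + deg y))" by simp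
    then show "x \<in> E \<and> y \<in> E" using SL0[of "nat (deg x + deg y)"] a by blast
  qed

  define d where "d = nat (deg \<beta>)"
  define R where "R = (\<lambda>p q. {(x,y). x \<in> E \<and> y \<in> E \<and> scaleN p x + scaleN q y = \<beta>})"
  define w where "w = (\<lambda>(p::nat) (q::nat) x y. al x * al y / (real p * real q))"
  define F where "F = (\<lambda>p q. \<Sum>(x,y)\<in>R p q. w p q x y * m x y)"
  define Pr where "Pr = (\<lambda>(p,q). \<Sum>(x,y)\<in>R p q. w p q x y * pairing N G x y)"
  define K where "K = {..d} \<times> {..d}"
  define Phi where "Phi = (\<lambda>p q. sum Pr (Dset p q \<inter> K))"
  define B where "B = {x \<in> E. deg x \<le> deg \<beta>}"
  have finB: "finite B" unfolding B_def by (rule E_fin)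
  have finK: "finite K" unfolding K_def by simp
  have Rbeta: "\<And>p q x y. (x,y) \<in> R p q \<Longrightarrow> real p * al x + real q * al y = 0"
    using orth unfolding R_def by (auto simp: al_add als)
  have Rdeg: "\<And>p q x y. (x,y) \<in> R p q \<Longrightarrow> int p * deg x + int q * deg y = deg \<beta>"
    unfolding R_def by (auto simp: deg_add degs)
  have RB: "R p q \<subseteq> B \<times> B" if "0 < p" "0 < q" for p q
  proof
    fix z assume z: "z \<in> R p q"
    obtain x y where xy: "z = (x,y)" by force
    have ex: "x \<in> E" "y \<in> E" using z xy unfolding R_def by auto
    have g1: "int p * deg x \<ge> 1 * deg x" using Edeg[OF ex(1)] that by (intro mult_right_mono) auto
    have g2: "int q * deg y \<ge> 1 * deg y" using Edeg[OF ex(2)] that by (intro mult_right_mono) auto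
    have zz: "(x,y) \<in> R p q" using z xy by simp
    have "deg x \<le> deg \<beta>" using Rdeg[OF zz] g1 g2 Edeg[OF ex(1)] Edeg[OF ex(2)] by linarith
    moreover have "deg y \<le> deg \<beta>" using Rdeg[OF zz] g1 g2 Edeg[OF ex(1)] Edeg[OF ex(2)] by linarith
    ultimately show "z \<in> B \<times> B" using xy ex unfolding B_def by auto
  qed
  have finR: "finite (R p q)" if "0 < p" "0 < q" for p q
    using RB[OF that] finB by (meson finite_SigmaI rev_finite_subset)
  have Rempty: "R p q = {}" if "0 < p" "0 < q" "d < p + q" for p q
  proof (rule ccontr)
    assume "R p q \<noteq> {}"
    then obtain x y where z: "(x,y) \<in> R p q" by auto
    have ex: "x \<in> E" "y \<in> E" using z unfolding R_def by auto
    have g1: "int p * deg x \<ge> int p * 1" using Edeg[OF ex(1)] that by (intro mult_left_mono) auto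
    have g2: "int q * deg y \<ge> int q * 1" using Edeg[OF ex(2)] that by (intro mult_left_mono) auto
    have "int p + int q \<le> deg \<beta>" using Rdeg[OF z] g1 g2 by linarith
    then show False using that unfolding d_def by linarith
  qed
  have PrZ: "Pr (a,b) = 0" if "0 < a" "0 < b" "d < a + b" for a b
    unfolding Pr_def using Rempty[OF that] by simp
  have FR: "F p q = Pr (p,q) + F (p+q) q + F p (p+q)" if pq: "0 < p" "0 < q" for p q :: nat
  proof -
    have trm: "w p q x y * m x y = w p q x y * pairing N G x y + w p q x y * m x (y - x) + w p q x y * m (x - y) y"
      if xy: "(x,y) \<in> R p q" for x y
    proof (cases "x = y")
      case True
      have "real p * al x + real q * al x = 0" using Rbeta[OF xy] True by simp
      then have "(real p + real q) * al x = 0" by (simp add: algebra_simps)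
      then have "al x = 0" using pq by simp
      then show ?thesis unfolding w_def by simp
    next
      case False
      have ex: "x \<in> E" "y \<in> E" using xy unfolding R_def by auto
      show ?thesis using mrec[OF E_pos[OF ex(1)] E_pos[OF ex(2)] False] by (simp add: algebra_simps)
    qed
    have s1: "F p q = (\<Sum>z\<in>R p q. (case z of (x,y) \<Rightarrow> w p q x y * pairing N G x y)
        + (case z of (x,y) \<Rightarrow> w p q x y * m x (y - x)) + (case z of (x,y) \<Rightarrow> w p q x y * m (x - y) y))"
      unfolding F_def by (rule sum.cong) (auto simp: trm)
    have A1: "(\<Sum>z\<in>R p q. (case z of (x,y) \<Rightarrow> w p q x y * m x (y - x))) = F (p+q) q"
    proof -
      define h1 where "h1 = (\<lambda>(x::'h, y::'h). (x, y + x))"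
      have inj: "inj_on h1 (R (p+q) q)" unfolding h1_def inj_on_def by auto
      have sub: "h1 ` R (p+q) q \<subseteq> R p q"
      proof
        fix z assume "z \<in> h1 ` R (p+q) q"
        then obtain x y where xy: "(x,y) \<in> R (p+q) q" "z = (x, y + x)" unfolding h1_def by auto
        have "x \<in> E" "y \<in> E" "scaleN (p+q) x + scaleN q y = \<beta>" using xy(1) unfolding R_def by auto
        then show "z \<in> R p q" using xy(2) E_add unfolding R_def by (auto simp: scaleN_add scaleN_addn algebra_simps)
      qed
      have zero: "\<forall>z \<in> R p q - h1 ` R (p+q) q. (case z of (x,y) \<Rightarrow> w p q x y * m x (y - x)) = 0"
      proof
        fix z assume z: "z \<in> R p q - h1 ` R (p+q) q"
        obtain x y where zxy: "z = (x,y)" by force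
        have xy: "(x,y) \<in> R p q" using z zxy by simp
        have ex: "x \<in> E" "y \<in> E" and eq: "scaleN p x + scaleN q y = \<beta>" using xy unfolding R_def by auto
        show "(case z of (x,y) \<Rightarrow> w p q x y * m x (y - x)) = 0"
        proof (rule ccontr)
          assume "(case z of (x,y) \<Rightarrow> w p q x y * m x (y - x)) \<noteq> 0"
          then have nz: "al x \<noteq> 0" "m x (y - x) \<noteq> 0" using zxy unfolding w_def by auto
          have "\<not> (deg x \<le> 0 \<or> deg (y - x) \<le> 0)" using mzero nz(2) by blast
          then have d1: "deg (y - x) > 0" by simp
          have h: "real p * al x + real q * al y = 0" using Rbeta[OF xy] .
          have h1': "real (p+q) * al x + real q * al (y - x) = 0" using h by (simp add: ald algebra_simps)
          have a1: "al (y - x) \<noteq> 0"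
          proof
            assume "al (y - x) = 0"
            then have "real (p+q) * al x = 0" using h1' by simp
            then show False using nz(1) pq by simp
          qed
          have "al x * al (y - x) * m x (y - x) \<noteq> 0" using nz a1 by simp
          then have "x \<in> E \<and> y - x \<in> E" using SL[OF Edeg[OF ex(1)] d1 _ pq(2) h1'] pq by simp
          moreover have "scaleN (p+q) x + scaleN q (y - x) = \<beta>" using eq by (simp add: scaleN_addn scaleN_diff algebra_simps)
          ultimately have "(x, y - x) \<in> R (p+q) q" unfolding R_def by simp
          moreover have "h1 (x, y - x) = z" unfolding h1_def using zxy by simp
          ultimately show False using z by blast
        qed
      qed
      have "(\<Sum>z\<in>R p q. (case z of (x,y) \<Rightarrow> w p q x y * m x (y - x)))
          = (\<Sum>z\<in>h1 ` R (p+q) q. (case z of (x,y) \<Rightarrow> w p q x y * m x (y - x)))"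
        using sum.mono_neutral_left[OF finR[OF pq] sub zero] by simp
      also have "\<dots> = (\<Sum>z\<in>R (p+q) q. (case h1 z of (x,y) \<Rightarrow> w p q x y * m x (y - x)))"
        using sum.reindex[OF inj] by (simp add: o_def)
      also have "\<dots> = F (p+q) q" unfolding F_def
      proof (rule sum.cong[OF refl])
        fix z assume z: "z \<in> R (p+q) q"
        obtain x y where zxy: "z = (x,y)" by force
        have hb: "real (p+q) * al x + real q * al y = 0" using Rbeta z zxy by blast
        have "w p q x (y + x) = w (p+q) q x y"
          unfolding w_def using wl1[of "real p" "real q" "al x" "al y"] hb pq by (simp add: al_add)
        then show "(case h1 z of (x,y) \<Rightarrow> w p q x y * m x (y - x)) = (case z of (x,y) \<Rightarrow> w (p+q) q x y * m x y)"
          unfolding h1_def using zxy by simp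
      qed
      finally show ?thesis .
    qed
    have A2: "(\<Sum>z\<in>R p q. (case z of (x,y) \<Rightarrow> w p q x y * m (x - y) y)) = F p (p+q)"
    proof -
      define h2 where "h2 = (\<lambda>(x::'h, y::'h). (x + y, y))"
      have inj: "inj_on h2 (R p (p+q))" unfolding h2_def inj_on_def by auto
      have sub: "h2 ` R p (p+q) \<subseteq> R p q"
      proof
        fix z assume "z \<in> h2 ` R p (p+q)"
        then obtain x y where xy: "(x,y) \<in> R p (p+q)" "z = (x + y, y)" unfolding h2_def by auto
        have "x \<in> E" "y \<in> E" "scaleN p x + scaleN (p+q) y = \<beta>" using xy(1) unfolding R_def by auto
        then show "z \<in> R p q" using xy(2) E_add unfolding R_def by (auto simp: scaleN_add scaleN_addn algebra_simps)
      qed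
      have zero: "\<forall>z \<in> R p q - h2 ` R p (p+q). (case z of (x,y) \<Rightarrow> w p q x y * m (x - y) y) = 0"
      proof
        fix z assume z: "z \<in> R p q - h2 ` R p (p+q)"
        obtain x y where zxy: "z = (x,y)" by force
        have xy: "(x,y) \<in> R p q" using z zxy by simp
        have ex: "x \<in> E" "y \<in> E" and eq: "scaleN p x + scaleN q y = \<beta>" using xy unfolding R_def by auto
        show "(case z of (x,y) \<Rightarrow> w p q x y * m (x - y) y) = 0"
        proof (rule ccontr)
          assume "(case z of (x,y) \<Rightarrow> w p q x y * m (x - y) y) \<noteq> 0"
          then have nz: "al y \<noteq> 0" "m (x - y) y \<noteq> 0" using zxy unfolding w_def by auto
          have "\<not> (deg (x - y) \<le> 0 \<or> deg y \<le> 0)" using mzero nz(2) by blast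
          then have d1: "deg (x - y) > 0" by simp
          have h: "real p * al x + real q * al y = 0" using Rbeta[OF xy] .
          have h1': "real p * al (x - y) + real (p+q) * al y = 0" using h by (simp add: ald algebra_simps)
          have a1: "al (x - y) \<noteq> 0"
          proof
            assume "al (x - y) = 0"
            then have "real (p+q) * al y = 0" using h1' by simp
            then show False using nz(1) pq by simp
          qed
          have "al (x - y) * al y * m (x - y) y \<noteq> 0" using nz a1 by simp
          then have "x - y \<in> E \<and> y \<in> E" using SL[OF d1 Edeg[OF ex(2)] pq(1) _ h1'] pq by simp
          moreover have "scaleN p (x - y) + scaleN (p+q) y = \<beta>" using eq by (simp add: scaleN_addn scaleN_diff algebra_simps)
          ultimately have "(x - y, y) \<in> R p (p+q)" unfolding R_def by simp
          moreover have "h2 (x - y, y) = z" unfolding h2_def using zxy by simp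
          ultimately show False using z by blast
        qed
      qed
      have "(\<Sum>z\<in>R p q. (case z of (x,y) \<Rightarrow> w p q x y * m (x - y) y))
          = (\<Sum>z\<in>h2 ` R p (p+q). (case z of (x,y) \<Rightarrow> w p q x y * m (x - y) y))"
        using sum.mono_neutral_left[OF finR[OF pq] sub zero] by simp
      also have "\<dots> = (\<Sum>z\<in>R p (p+q). (case h2 z of (x,y) \<Rightarrow> w p q x y * m (x - y) y))"
        using sum.reindex[OF inj] by (simp add: o_def)
      also have "\<dots> = F p (p+q)" unfolding F_def
      proof (rule sum.cong[OF refl])
        fix z assume z: "z \<in> R p (p+q)"
        obtain x y where zxy: "z = (x,y)" by force
        have hb: "real p * al x + real (p+q) * al y = 0" using Rbeta z zxy by blast
        have "w p q (x + y) y = w p (p+q) x y"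
          unfolding w_def using wl2[of "real p" "real q" "al x" "al y"] hb pq by (simp add: al_add)
        then show "(case h2 z of (x,y) \<Rightarrow> w p q x y * m (x - y) y) = (case z of (x,y) \<Rightarrow> w p (p+q) x y * m x y)"
          unfolding h2_def using zxy by simp
      qed
      finally show ?thesis .
    qed
    have "F p q = Pr (p,q) + (\<Sum>z\<in>R p q. (case z of (x,y) \<Rightarrow> w p q x y * m x (y - x)))
        + (\<Sum>z\<in>R p q. (case z of (x,y) \<Rightarrow> w p q x y * m (x - y) y))"
      unfolding s1 Pr_def by (simp add: sum.distrib split_def)
    then show ?thesis using A1 A2 by simp
  qed
  have PhiR: "Phi p q = Pr (p,q) + Phi (p+q) q + Phi p (p+q)" if pq: "0 < p" "0 < q" for p q :: nat
  proof -
    define A1 where "A1 = Dset (p+q) q \<inter> K"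
    define A2 where "A2 = Dset p (p+q) \<inter> K"
    have fin1: "finite A1" unfolding A1_def using finK by simp
    have fin2: "finite A2" unfolding A2_def using finK by simp
    have disj: "A1 \<inter> A2 = {}" unfolding A1_def A2_def using D_disj[OF pq] by blast
    have nin: "(p,q) \<notin> A1 \<union> A2" unfolding A1_def A2_def using D_notin[OF pq] by blast
    have un: "sum Pr (A1 \<union> A2) = Phi (p+q) q + Phi p (p+q)"
      unfolding Phi_def A1_def[symmetric] A2_def[symmetric] using sum.union_disjoint[OF fin1 fin2 disj] by simp
    have eqs: "Dset p q \<inter> K = (insert (p,q) (Dset (p+q) q \<union> Dset p (p+q))) \<inter> K"
      by (subst D_split[OF pq]) (rule refl)
    show ?thesis
    proof (cases "(p,q) \<in> K")
      case True
      have "Dset p q \<inter> K = insert (p,q) (A1 \<union> A2)" using eqs True unfolding A1_def A2_def by (simp add: Int_Un_distrib2 Int_insert_left)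
      then have "Phi p q = Pr (p,q) + sum Pr (A1 \<union> A2)" unfolding Phi_def using fin1 fin2 nin by simp
      then show ?thesis using un by simp
    next
      case False
      have "Dset p q \<inter> K = A1 \<union> A2" using eqs False unfolding A1_def A2_def by (simp add: Int_Un_distrib2 Int_insert_left)
      moreover have "Pr (p,q) = 0"
      proof (rule PrZ[OF pq])
        show "d < p + q" using False unfolding K_def by auto
      qed
      ultimately show ?thesis using un unfolding Phi_def by simp
    qed
  qed
  have MI: "\<forall>p q. 0<p \<longrightarrow> 0<q \<longrightarrow> Suc d - (p+q) = k \<longrightarrow> F p q = Phi p q" for k
  proof (induction k rule: less_induct)
    case (less k)
    show ?case
    proof (intro allI impI)
      fix p q :: nat assume pq: "0<p" "0<q" and k: "Suc d - (p+q) = k"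
      show "F p q = Phi p q"
      proof (cases "d < p + q")
        case True
        have "F p q = 0" unfolding F_def using Rempty[OF pq True] by simp
        moreover have "Phi p q = 0" unfolding Phi_def
        proof (rule sum.neutral, rule ballI)
          fix z assume z: "z \<in> Dset p q \<inter> K"
          obtain a b where zab: "z = (a,b)" by force
          have ab: "0<a" "0<b" using z zab unfolding Dset_def by auto
          moreover have "p+q \<le> a+b" using D_sum z zab by blast
          ultimately show "Pr z = 0" using PrZ True zab by simp
        qed
        ultimately show ?thesis by simp
      next
        case False
        have lt1: "Suc d - (p+q+q) < k" using pq False k by auto
        have lt2: "Suc d - (p+(p+q)) < k" using pq False k by auto
        have "F (p+q) q = Phi (p+q) q" using less.IH[OF lt1, rule_format, of "p+q" q] pq by simp
        moreover have "F p (p+q) = Phi p (p+q)" using less.IH[OF lt2, rule_format, of p "p+q"] pq by simp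
        ultimately show ?thesis using FR[OF pq] PhiR[OF pq] by simp
      qed
    qed
  qed
  have F11: "F 1 1 = Phi 1 1" using MI[of "Suc d - (1+1)", rule_format, of 1 1] by simp
  have L1: "(\<Sum>\<^sub>\<infinity>b1\<in>{b1. pos deg b1 \<and> pos deg (\<beta> - b1)}.
                      al b1 * al (\<beta> - b1) * m b1 (\<beta> - b1)) = F 1 1"
  proof -
    define A' where "A' = {b1. b1 \<in> E \<and> \<beta> - b1 \<in> E}"
    define f where "f = (\<lambda>b1. al b1 * al (\<beta> - b1) * m b1 (\<beta> - b1))"
    define j where "j = (\<lambda>b::'h. (b, \<beta> - b))"
    have injj: "inj_on j A'" unfolding j_def inj_on_def by auto
    have R11: "R 1 1 = j ` A'"
    proof (intro equalityI subsetI)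
      fix z assume z: "z \<in> R 1 1"
      obtain x y where zxy: "z = (x,y)" by force
      have "x \<in> E" "y \<in> E" "x + y = \<beta>" using z zxy unfolding R_def by auto
      moreover then have "y = \<beta> - x" by (simp add: algebra_simps)
      ultimately show "z \<in> j ` A'" unfolding j_def A'_def using zxy by auto
    next
      fix z assume "z \<in> j ` A'"
      then show "z \<in> R 1 1" unfolding j_def A'_def R_def by auto
    qed
    have finA: "finite A'" using finR[of 1 1] R11 injj finite_imageD by fastforce
    have "infsum f {b1. pos deg b1 \<and> pos deg (\<beta> - b1)} = infsum f A'"
    proof (rule infsum_cong_neutral)
      fix x assume "x \<in> A' - {b1. pos deg b1 \<and> pos deg (\<beta> - b1)}"
      then show "f x = 0" unfolding A'_def using E_pos by auto
    next
      fix x assume x: "x \<in> {b1. pos deg b1 \<and> pos deg (\<beta> - b1)} - A'"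
      show "f x = 0"
      proof (rule ccontr)
        assume nz: "f x \<noteq> 0"
        have "real 1 * al x + real 1 * al (\<beta> - x) = 0" using orth by (simp add: ald)
        then have "x \<in> E \<and> \<beta> - x \<in> E"
          using SL[of x "\<beta> - x" 1 1] nz x posD unfolding f_def by auto
        then show False using x unfolding A'_def by auto
      qed
    qed simp
    also have "\<dots> = sum f A'" using finA by simp
    also have "\<dots> = (\<Sum>z\<in>A'. (case j z of (x,y) \<Rightarrow> w 1 1 x y * m x y))"
      unfolding f_def j_def w_def by simp
    also have "\<dots> = F 1 1" unfolding F_def R11 by (subst sum.reindex[OF injj]) (simp add: o_def)
    finally show ?thesis unfolding f_def .
  qed
  have L2: "(\<Sum>\<^sub>\<infinity>(k1, k2, g1, g2)\<in>{(k1::nat, k2::nat, g1::'h, g2::'h).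
                       0 < k1 \<and> 0 < k2 \<and> coprime k1 k2 \<and>
                       pos deg (scaleN k1 g1) \<and> pos deg (scaleN k2 g2) \<and>
                       scaleN k1 g1 + scaleN k2 g2 = \<beta>}.
                    al (scaleN k1 g1) * al (scaleN k2 g2) / (real k1 ^ 2 * real k2 ^ 2)
                      * pairing N G g1 g2) = Phi 1 1"
    (is "infsum ?h ?T = _")
  proof -
    define Sg where "Sg = Sigma (Dset 1 1 \<inter> K) (\<lambda>k. R (fst k) (snd k))"
    define phi where "phi = (\<lambda>(k::nat\<times>nat, g::'h\<times>'h). (fst k, snd k, fst g, snd g))"
    have Dpos: "\<And>a b. (a,b) \<in> Dset 1 1 \<Longrightarrow> 0 < a \<and> 0 < b" unfolding Dset_def by auto
    have finRk: "\<forall>k\<in>Dset 1 1 \<inter> K. finite (R (fst k) (snd k))"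
    proof
      fix k assume "k \<in> Dset 1 1 \<inter> K"
      then show "finite (R (fst k) (snd k))" using Dpos finR by (metis IntD1 prod.collapse)
    qed
    have finSg: "finite Sg" unfolding Sg_def
      using finK finRk by (intro finite_SigmaI) auto
    have injphi: "inj_on phi Sg" unfolding phi_def inj_on_def by auto
    have "infsum ?h ?T = infsum ?h (phi ` Sg)"
    proof (rule infsum_cong_neutral)
      fix t assume t: "t \<in> phi ` Sg - ?T"
      then obtain k1 k2 g1 g2 where tt: "t = (k1,k2,g1,g2)" "(k1,k2) \<in> Dset 1 1 \<inter> K" "(g1,g2) \<in> R k1 k2"
        unfolding Sg_def phi_def by auto
      have kp: "0 < k1" "0 < k2" using Dpos tt(2) by auto
      have cop: "coprime k1 k2" using tt(2) D11 by auto
      have ge: "g1 \<in> E" "g2 \<in> E" "scaleN k1 g1 + scaleN k2 g2 = \<beta>" using tt(3) unfolding R_def by auto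
      have "pos deg (scaleN k1 g1)" "pos deg (scaleN k2 g2)"
        using posI Edeg[OF ge(1)] Edeg[OF ge(2)] kp by (auto simp: degs)
      then have "t \<in> ?T" using tt(1) kp cop ge(3) by simp
      then show "?h t = 0" using t by simp
    next
      fix t assume t: "t \<in> ?T - phi ` Sg"
      then obtain k1 k2 g1 g2 where tt: "t = (k1,k2,g1,g2)" "0 < k1" "0 < k2" "coprime k1 k2"
        "scaleN k1 g1 + scaleN k2 g2 = \<beta>" by auto
      show "?h t = 0"
      proof (rule ccontr)
        assume "?h t \<noteq> 0"
        then have "pairing N G g1 g2 \<noteq> 0" using tt(1) by auto
        then have ge: "g1 \<in> E" "g2 \<in> E" using pairE by auto
        then have inR: "(g1,g2) \<in> R k1 k2" using tt(5) unfolding R_def by simp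
        have "\<not> d < k1 + k2" using Rempty[OF tt(2) tt(3)] inR by auto
        then have "(k1,k2) \<in> K" unfolding K_def by auto
        moreover have "(k1,k2) \<in> Dset 1 1" using D11 tt(2-4) by auto
        ultimately have "((k1,k2),(g1,g2)) \<in> Sg" unfolding Sg_def using inR by auto
        then have "t \<in> phi ` Sg" unfolding phi_def using tt(1) by force
        then show False using t by simp
      qed
    qed simp
    also have "\<dots> = sum ?h (phi ` Sg)" using finSg by simp
    also have "\<dots> = sum (?h \<circ> phi) Sg" by (rule sum.reindex[OF injphi])
    also have "\<dots> = (\<Sum>k\<in>Dset 1 1 \<inter> K. \<Sum>g\<in>R (fst k) (snd k). (?h \<circ> phi) (k,g))"
      unfolding Sg_def by (subst sum.Sigma) (use finK finRk in auto)
    also have "\<dots> = Phi 1 1" unfolding Phi_def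
    proof (rule sum.cong[OF refl])
      fix k assume k: "k \<in> Dset 1 1 \<inter> K"
      obtain k1 k2 where kk: "k = (k1,k2)" by force
      have kp: "0 < k1" "0 < k2" using Dpos k kk by auto
      have e1: "Pr k = (\<Sum>g\<in>R k1 k2. (case g of (x,y) \<Rightarrow> w k1 k2 x y * pairing N G x y))"
        unfolding Pr_def kk by simp
      have e2: "(\<Sum>g\<in>R (fst k) (snd k). (?h \<circ> phi) (k,g)) = (\<Sum>g\<in>R k1 k2. (?h \<circ> phi) ((k1,k2),g))"
        unfolding kk by simp
      have e3: "(\<Sum>g\<in>R k1 k2. (?h \<circ> phi) ((k1,k2),g)) = (\<Sum>g\<in>R k1 k2. (case g of (x,y) \<Rightarrow> w k1 k2 x y * pairing N G x y))"
      proof (rule sum.cong[OF refl])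
        fix g assume "g \<in> R k1 k2"
        obtain g1 g2 where gg: "g = (g1,g2)" by force
        have "real k1 * al g1 * (real k2 * al g2) * pairing N G g1 g2 / ((real k1)\<^sup>2 * (real k2)\<^sup>2)
              = al g1 * al g2 * pairing N G g1 g2 / (real k1 * real k2)"
          using kp by (simp add: power2_eq_square field_simps)
        then show "(?h \<circ> phi) ((k1,k2),g) = (case g of (x,y) \<Rightarrow> w k1 k2 x y * pairing N G x y)"
          unfolding phi_def w_def gg by (simp add: als)
      qed
      show "(\<Sum>g\<in>R (fst k) (snd k). (?h \<circ> phi) (k,g)) = Pr k" using e1 e2 e3 by simp
    qed
    finally show ?thesis .
  qed
  show ?thesis using L1 L2 F11 by simp
qed

end
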